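(* Let $n\ge2$ and $\mu\in[0,1-\frac1n]$. Every optimal solution $P=(p_{ij})$ of problem (P) is TP2, i.e. $p_{ij}\,p_{i'j'}\ge p_{ij'}\,p_{i'j}$ for all $1\le i<i'\le n$ and $1\le j<j'\le n$ (equivalently, the associated step density $f(x,y)=n^2p_{ij}$ on $((i-1)/n,i/n)\times((j-1)/n,j/n)$ satisfies $f(x,y)f(x',y')\ge f(x,y')f(x',y)$ whenever $x<x'$, $y<y'$).
   Context: An $n\times n$ checkerboard copula is a real $n\times n$ matrix $P=(p_{ij})$ with nonnegative entries whose row and column sums all equal $\frac1n$. $\Xi=(\xi_{ij})$ with $\xi_{ij}=1$ if $i=j$, $2$ if $i>j$, $0$ if $i<j$. Problem (P): minimize $I(P)=\sum_{i,j}p_{ij}\log p_{ij}$ (with $0\log0=0$) over $n\times n$ checkerboard copulas $P$ with $1-\mathrm{tr}(\Xi P\Xi P^\top)=\mu$. An optimal solution of (P) is called a MICK (minimum information checkerboard copula under fixed Kendall's $\tau$). *)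

theory Defs
  imports Complex_Main
begin

text \<open>n x n real matrices are represented as functions nat => nat => real,
  with indices ranging over {0..<n} (0-based instead of 1-based).\<close>

definition checkerboard_copula :: "nat \<Rightarrow> (nat \<Rightarrow> nat \<Rightarrow> real) \<Rightarrow> bool" where
  "checkerboard_copula n P \<longleftrightarrow>
     (\<forall>i<n. \<forall>j<n. 0 \<le> P i j) \<and>
     (\<forall>i<n. (\<Sum>j<n. P i j) = 1 / real n) \<and>
     (\<forall>j<n. (\<Sum>i<n. P i j) = 1 / real n)"

definition Xi :: "nat \<Rightarrow> nat \<Rightarrow> real" where
  "Xi i j = (if i = j then 1 else if i > j then 2 else 0)"

definition mat_mult :: "nat \<Rightarrow> (nat \<Rightarrow> nat \<Rightarrow> real) \<Rightarrow> (nat \<Rightarrow> nat \<Rightarrow> real) \<Rightarrow> (nat \<Rightarrow> nat \<Rightarrow> real)" where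
  "mat_mult n A B = (\<lambda>i k. \<Sum>j<n. A i j * B j k)"

definition mat_transpose :: "(nat \<Rightarrow> nat \<Rightarrow> real) \<Rightarrow> (nat \<Rightarrow> nat \<Rightarrow> real)" where
  "mat_transpose A = (\<lambda>i j. A j i)"

definition mat_trace :: "nat \<Rightarrow> (nat \<Rightarrow> nat \<Rightarrow> real) \<Rightarrow> real" where
  "mat_trace n A = (\<Sum>i<n. A i i)"

definition kendall_tau :: "nat \<Rightarrow> (nat \<Rightarrow> nat \<Rightarrow> real) \<Rightarrow> real" where
  "kendall_tau n P = 1 - mat_trace n
     (mat_mult n (mat_mult n (mat_mult n Xi P) Xi) (mat_transpose P))"

text \<open>Information I(P) = sum p log p, with 0 log 0 = 0 (ln 0 = 0 in Isabelle, but made explicit).\<close>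
definition info :: "nat \<Rightarrow> (nat \<Rightarrow> nat \<Rightarrow> real) \<Rightarrow> real" where
  "info n P = (\<Sum>i<n. \<Sum>j<n. (if P i j = 0 then 0 else P i j * ln (P i j)))"

definition feasible :: "nat \<Rightarrow> real \<Rightarrow> (nat \<Rightarrow> nat \<Rightarrow> real) \<Rightarrow> bool" where
  "feasible n \<mu> P \<longleftrightarrow> checkerboard_copula n P \<and> kendall_tau n P = \<mu>"

definition MICK :: "nat \<Rightarrow> real \<Rightarrow> (nat \<Rightarrow> nat \<Rightarrow> real) \<Rightarrow> bool" where
  "MICK n \<mu> P \<longleftrightarrow> feasible n \<mu> P \<and> (\<forall>Q. feasible n \<mu> Q \<longrightarrow> info n P \<le> info n Q)"

definition TP2 :: "nat \<Rightarrow> (nat \<Rightarrow> nat \<Rightarrow> real) \<Rightarrow> bool" where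
  "TP2 n P \<longleftrightarrow> (\<forall>i i' j j'. i < i' \<and> i' < n \<and> j < j' \<and> j' < n \<longrightarrow>
      P i j * P i' j' \<ge> P i j' * P i' j)"

end

theory Submission
  imports Defs
begin

lemma swap4:
  fixes f :: "nat \<Rightarrow> nat \<Rightarrow> nat \<Rightarrow> nat \<Rightarrow> real"
  shows "(\<Sum>x<n. \<Sum>y<n. \<Sum>k<n. \<Sum>j<n. f x y k j) = (\<Sum>j<n. \<Sum>k<n. \<Sum>x<n. \<Sum>y<n. f x y k j)"
proof -
  let ?A = "{..<n}"
  have "(\<Sum>x\<in>?A. \<Sum>y\<in>?A. \<Sum>k\<in>?A. \<Sum>j\<in>?A. f x y k j) = (\<Sum>x\<in>?A. \<Sum>y\<in>?A. \<Sum>j\<in>?A. \<Sum>k\<in>?A. f x y k j)"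
    by (rule sum.cong[OF refl], rule sum.cong[OF refl], rule sum.swap)
  also have "\<dots> = (\<Sum>x\<in>?A. \<Sum>j\<in>?A. \<Sum>y\<in>?A. \<Sum>k\<in>?A. f x y k j)"
    by (rule sum.cong[OF refl], rule sum.swap)
  also have "\<dots> = (\<Sum>j\<in>?A. \<Sum>x\<in>?A. \<Sum>y\<in>?A. \<Sum>k\<in>?A. f x y k j)"
    by (rule sum.swap)
  also have "\<dots> = (\<Sum>j\<in>?A. \<Sum>x\<in>?A. \<Sum>k\<in>?A. \<Sum>y\<in>?A. f x y k j)"
    by (rule sum.cong[OF refl], rule sum.cong[OF refl], rule sum.swap)
  also have "\<dots> = (\<Sum>j\<in>?A. \<Sum>k\<in>?A. \<Sum>x\<in>?A. \<Sum>y\<in>?A. f x y k j)"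
    by (rule sum.cong[OF refl], rule sum.swap)
  finally show ?thesis .
qed

definition Bf :: "nat \<Rightarrow> (nat \<Rightarrow> nat \<Rightarrow> real) \<Rightarrow> (nat \<Rightarrow> nat \<Rightarrow> real) \<Rightarrow> real" where
  "Bf n X Y = (\<Sum>j<n. \<Sum>k<n. X j k * (\<Sum>x<n. \<Sum>y<n. Xi x j * Xi k y * Y x y))"

lemma tau_Bf: "kendall_tau n P = 1 - Bf n P P"
proof -
  have "mat_trace n (mat_mult n (mat_mult n (mat_mult n Xi P) Xi) (mat_transpose P))
     = (\<Sum>x<n. \<Sum>y<n. \<Sum>k<n. \<Sum>j<n. Xi x j * P j k * Xi k y * P x y)"
    by (simp add: mat_trace_def mat_mult_def mat_transpose_def sum_distrib_left sum_distrib_right mult_ac)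
  also have "\<dots> = (\<Sum>j<n. \<Sum>k<n. \<Sum>x<n. \<Sum>y<n. Xi x j * P j k * Xi k y * P x y)"
    by (rule swap4)
  also have "\<dots> = Bf n P P"
    by (simp add: Bf_def sum_distrib_left mult_ac)
  finally show ?thesis by (simp add: kendall_tau_def)
qed

lemma Bf_prod_left:
  "Bf n (\<lambda>j k. u j * z k) Y = (\<Sum>x<n. \<Sum>y<n. Y x y * (\<Sum>j<n. u j * Xi x j) * (\<Sum>k<n. z k * Xi k y))"
proof -
  have "Bf n (\<lambda>j k. u j * z k) Y = (\<Sum>j<n. \<Sum>k<n. \<Sum>x<n. \<Sum>y<n. Y x y * (u j * Xi x j) * (z k * Xi k y))"
    by (simp add: Bf_def sum_distrib_left mult_ac)
  also have "\<dots> = (\<Sum>x<n. \<Sum>y<n. \<Sum>k<n. \<Sum>j<n. Y x y * (u j * Xi x j) * (z k * Xi k y))"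
    by (rule swap4[symmetric])
  also have "\<dots> = (\<Sum>x<n. \<Sum>y<n. Y x y * (\<Sum>j<n. u j * Xi x j) * (\<Sum>k<n. z k * Xi k y))"
    apply (rule sum.cong[OF refl], rule sum.cong[OF refl])
    apply (simp add: sum_distrib_left sum_distrib_right mult_ac)
    by (rule sum.swap)
  finally show ?thesis .
qed

lemma Bf_prod_right:
  "Bf n X (\<lambda>x y. u x * z y) = (\<Sum>j<n. \<Sum>k<n. X j k * (\<Sum>x<n. Xi x j * u x) * (\<Sum>y<n. Xi k y * z y))"
  by (simp add: Bf_def sum_distrib_left sum_distrib_right mult_ac)

lemma Bf_add_left: "Bf n (\<lambda>a b. X a b + Y a b) Z = Bf n X Z + Bf n Y Z"
  by (simp add: Bf_def sum.distrib algebra_simps)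
lemma Bf_add_right: "Bf n Z (\<lambda>a b. X a b + Y a b) = Bf n Z X + Bf n Z Y"
  by (simp add: Bf_def sum.distrib algebra_simps)
lemma Bf_smult_left: "Bf n (\<lambda>a b. e * X a b) Z = e * Bf n X Z"
  by (simp add: Bf_def sum_distrib_left algebra_simps)
lemma Bf_smult_right: "Bf n Z (\<lambda>a b. e * X a b) = e * Bf n Z X"
  by (simp add: Bf_def sum_distrib_left algebra_simps)

lemma Bf_pert: "Bf n (\<lambda>a b. X a b + e * D a b) (\<lambda>a b. X a b + e * D a b)
   = Bf n X X + e * (Bf n X D + Bf n D X) + e^2 * Bf n D D"
  by (simp add: Bf_add_left Bf_add_right Bf_smult_left Bf_smult_right algebra_simps power2_eq_square)

lemma Xi_sum: "(\<Sum>x<n. \<Sum>j<n. Xi x j) = real n ^ 2"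
proof (induction n)
  case 0 then show ?case by simp
next
  case (Suc n)
  have "(\<Sum>x<Suc n. \<Sum>j<Suc n. Xi x j) = (\<Sum>x<n. \<Sum>j<n. Xi x j) + (\<Sum>x<n. Xi x n) + (\<Sum>j<n. Xi n j) + Xi n n"
    by (simp add: sum.distrib)
  also have "(\<Sum>x<n. Xi x n) = 0" by (simp add: Xi_def)
  also have "(\<Sum>j<n. Xi n j) = 2 * real n" by (simp add: Xi_def)
  also have "Xi n n = 1" by (simp add: Xi_def)
  finally show ?case using Suc by (simp add: power2_eq_square algebra_simps)
qed

lemma Xi_flip: "Xi i j = 2 - Xi j i"
  by (simp add: Xi_def)

lemma tangent:
  fixes x y :: real assumes "0 < y" "0 \<le> x"
  shows "y * ln y + (ln y + 1) * (x - y) \<le> x * ln x"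
proof (cases "x = 0")
  case True thus ?thesis using assms by simp
next
  case False
  hence xp: "x > 0" using assms by simp
  have "ln (y/x) \<le> y/x - 1" using ln_le_minus_one[of "y/x"] xp assms by simp
  hence "x * ln (y/x) \<le> x * (y/x - 1)" using xp by (simp add: mult_left_mono)
  hence "x * (ln y - ln x) \<le> y - x" using xp assms by (simp add: ln_div right_diff_distrib)
  thus ?thesis by (simp add: algebra_simps)
qed

lemma phi_convex:
  fixes x y t :: real assumes "0 \<le> x" "0 \<le> y" "0 \<le> t" "t \<le> 1"
  shows "((1-t)*x + t*y) * ln ((1-t)*x + t*y) \<le> (1-t) * (x * ln x) + t * (y * ln y)"
proof -
  define m where "m = (1-t)*x + t*y"
  have m0: "m \<ge> 0" using assms by (simp add: m_def)
  show ?thesis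
  proof (cases "m = 0")
    case True
    have "(1-t)*x = 0" "t*y = 0" using True assms unfolding m_def
      by (smt (verit) mult_nonneg_nonneg)+
    hence z: "(1-t) * (x * ln x) = 0" "t * (y * ln y) = 0"
      by (metis mult.assoc mult_zero_left)+
    have "m * ln m = 0" using True by simp
    thus ?thesis using z unfolding m_def by linarith
  next
    case False
    hence mp: "m > 0" using m0 by simp
    have h1: "m * ln m + (ln m + 1) * (x - m) \<le> x * ln x" by (rule tangent[OF mp assms(1)])
    have h2: "m * ln m + (ln m + 1) * (y - m) \<le> y * ln y" by (rule tangent[OF mp assms(2)])
    have "(1-t) * (m * ln m + (ln m + 1) * (x - m)) + t * (m * ln m + (ln m + 1) * (y - m))
          \<le> (1-t) * (x * ln x) + t * (y * ln y)"
      using h1 h2 assms by (intro add_mono mult_left_mono) auto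
    moreover have "(1-t) * (m * ln m + (ln m + 1) * (x - m)) + t * (m * ln m + (ln m + 1) * (y - m))
         = m * ln m + (ln m + 1) * ((1-t)*x + t*y - m)" by (simp add: algebra_simps)
    ultimately show ?thesis by (simp add: m_def)
  qed
qed

lemma info_alt: "info n P = (\<Sum>x<n. \<Sum>y<n. P x y * ln (P x y))"
  unfolding info_def by (intro sum.cong refl) simp


lemma sum4:
  fixes h :: "nat \<Rightarrow> nat \<Rightarrow> real"
  assumes "a \<noteq> a'" "b \<noteq> b'" "a < n" "a' < n" "b < n" "b' < n"
    and z: "\<And>x y. (x \<noteq> a \<and> x \<noteq> a') \<or> (y \<noteq> b \<and> y \<noteq> b') \<Longrightarrow> h x y = 0"
  shows "(\<Sum>x<n. \<Sum>y<n. h x y) = h a b + h a b' + h a' b + h a' b'"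
proof -
  have inner: "(\<Sum>y<n. h x y) = h x b + h x b'" if "x \<in> {a, a'}" for x
  proof -
    have "(\<Sum>y<n. h x y) = (\<Sum>y\<in>{b,b'}. h x y)"
      by (rule sum.mono_neutral_right) (use assms that in auto)
    thus ?thesis using assms by simp
  qed
  have "(\<Sum>x<n. \<Sum>y<n. h x y) = (\<Sum>x\<in>{a,a'}. \<Sum>y<n. h x y)"
    by (rule sum.mono_neutral_right) (use assms in \<open>auto intro!: sum.neutral\<close>)
  also have "\<dots> = (\<Sum>y<n. h a y) + (\<Sum>y<n. h a' y)" using assms by simp
  finally show ?thesis using inner by simp
qed

lemma dsum_ge:
  fixes f :: "nat \<Rightarrow> nat \<Rightarrow> real"
  assumes "\<And>x y. x < n \<Longrightarrow> y < n \<Longrightarrow> 0 \<le> f x y" "a < n" "b < n"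
  shows "f a b \<le> (\<Sum>x<n. \<Sum>y<n. f x y)"
proof -
  have "f a b \<le> (\<Sum>y<n. f a y)" by (rule member_le_sum) (use assms in auto)
  also have "\<dots> \<le> (\<Sum>x<n. \<Sum>y<n. f x y)"
    by (rule member_le_sum[where f="\<lambda>x. \<Sum>y<n. f x y"]) (use assms in \<open>auto intro!: sum_nonneg\<close>)
  finally show ?thesis .
qed

lemma copula_total:
  assumes "n > 0" "checkerboard_copula n P"
  shows "(\<Sum>x<n. \<Sum>y<n. P x y) = 1"
  using assms by (simp add: checkerboard_copula_def)

lemma gibbs:
  assumes n0: "n > 0" and cop: "checkerboard_copula n P"
  shows "info n (\<lambda>x y. 1/real n * (1/real n)) \<le> info n P"
proof -
  define y0 where "y0 = 1/real n * (1/real n)"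
  have y0p: "y0 > 0" using n0 by (simp add: y0_def)
  have ny0: "real n * (real n * y0) = 1" using n0 by (simp add: y0_def)
  have nn: "\<And>x y. x < n \<Longrightarrow> y < n \<Longrightarrow> 0 \<le> P x y" using cop by (simp add: checkerboard_copula_def)
  have "(\<Sum>x<n. \<Sum>y<n. y0 * ln y0 + (ln y0 + 1) * (P x y - y0)) \<le> info n P"
    unfolding info_alt by (intro sum_mono tangent y0p nn) auto
  moreover have "(\<Sum>x<n. \<Sum>y<n. y0 * ln y0 + (ln y0 + 1) * (P x y - y0))
      = real n * (real n * (y0 * ln y0)) + (ln y0 + 1) * ((\<Sum>x<n. \<Sum>y<n. P x y) - real n * (real n * y0))"
    by (simp add: sum.distrib sum_subtractf sum_distrib_left right_diff_distrib)
  moreover have "info n (\<lambda>x y. 1/real n * (1/real n)) = real n * (real n * (y0 * ln y0))"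
    by (simp add: info_alt y0_def)
  ultimately show ?thesis using copula_total[OF n0 cop] ny0 by simp
qed

lemma Pi_cop: "n > 0 \<Longrightarrow> checkerboard_copula n (\<lambda>x y. 1/real n * (1/real n))"
  by (simp add: checkerboard_copula_def)

lemma Pi_tau: assumes "n > 0" shows "kendall_tau n (\<lambda>x y. 1/real n * (1/real n)) = 0"
proof -
  define c where "c = 1/real n"
  define r where "r x = (\<Sum>j<n. Xi x j)" for x
  define s where "s y = (\<Sum>k<n. Xi k y)" for y
  have "Bf n (\<lambda>x y. c * c) (\<lambda>x y. c * c) = (\<Sum>x<n. \<Sum>y<n. c * c * (\<Sum>j<n. c * Xi x j) * (\<Sum>k<n. c * Xi k y))"
    by (rule Bf_prod_left[of n "\<lambda>_. c" "\<lambda>_. c", simplified])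
  also have "\<dots> = (\<Sum>x<n. \<Sum>y<n. c * c * (c * r x) * (c * s y))"
    by (simp add: r_def s_def sum_distrib_left)
  also have "\<dots> = c*c*c*c * (sum r {..<n}) * (sum s {..<n})"
    by (simp add: sum_distrib_left sum_distrib_right mult_ac)
  also have "sum r {..<n} = real n ^ 2" unfolding r_def by (rule Xi_sum)
  also have "sum s {..<n} = real n ^ 2" unfolding s_def by (subst sum.swap) (rule Xi_sum)
  finally have "Bf n (\<lambda>x y. c * c) (\<lambda>x y. c * c) = 1" using assms by (simp add: c_def power2_eq_square)
  thus ?thesis by (simp add: tau_Bf c_def)
qed


lemma delta_sum:
  fixes f :: "nat \<Rightarrow> real"
  assumes "a < n" "a' < n"
  shows "(\<Sum>j<n. ((if j = a then 1 else 0) - (if j = a' then 1 else 0)) * f j) = f a - f a'"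
    and "(\<Sum>j<n. f j * ((if j = a then 1 else 0) - (if j = a' then 1 else 0))) = f a - f a'"
proof -
  have e1: "((if j = a then 1 else 0) - (if j = a' then 1 else 0)) * f j
     = (if j = a then f j else 0) - (if j = a' then f j else 0)" for j by simp
  show "(\<Sum>j<n. ((if j = a then 1 else 0) - (if j = a' then 1 else 0)) * f j) = f a - f a'"
    unfolding e1 sum_subtractf using assms by simp
  have e2: "f j * ((if j = a then 1 else 0) - (if j = a' then 1 else 0))
     = (if j = a then f j else 0) - (if j = a' then f j else 0)" for j by simp
  show "(\<Sum>j<n. f j * ((if j = a then 1 else 0) - (if j = a' then 1 else 0))) = f a - f a'"
    unfolding e2 sum_subtractf using assms by simp
qed

theorem proposition3:
  fixes n :: nat and \<mu> :: real and P :: "nat \<Rightarrow> nat \<Rightarrow> real"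
  assumes "n \<ge> 2"
    and "0 \<le> \<mu>" and "\<mu> \<le> 1 - 1 / real n"
    and "MICK n \<mu> P"
  shows "TP2 n P"
proof (rule ccontr)
  assume "\<not> TP2 n P"
  then obtain a a' b b' where ab: "a < a'" "a' < n" "b < b'" "b' < n"
    and viol: "P a b * P a' b' < P a b' * P a' b"
    unfolding TP2_def by (auto simp: not_le)
  have n0: "n > 0" using assms by simp
  have aN: "a < n" and bN: "b < n" using ab by auto
  have cop: "checkerboard_copula n P" and tauP: "kendall_tau n P = \<mu>"
    and opt: "\<And>Q. feasible n \<mu> Q \<Longrightarrow> info n P \<le> info n Q"
    using assms(4) by (auto simp: MICK_def feasible_def)
  have nn: "\<And>x y. x < n \<Longrightarrow> y < n \<Longrightarrow> 0 \<le> P x y" using cop by (simp add: checkerboard_copula_def)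
  have rows: "\<And>x. x < n \<Longrightarrow> (\<Sum>y<n. P x y) = 1 / real n" using cop by (simp add: checkerboard_copula_def)
  have cols: "\<And>y. y < n \<Longrightarrow> (\<Sum>x<n. P x y) = 1 / real n" using cop by (simp add: checkerboard_copula_def)
  define pa where "pa = P a b"
  define pb where "pb = P a' b'"
  define pc where "pc = P a b'"
  define pd where "pd = P a' b"
  have pa0: "pa \<ge> 0" and pb0: "pb \<ge> 0" and pc0: "pc \<ge> 0" and pd0: "pd \<ge> 0"
    using nn ab unfolding pa_def pb_def pc_def pd_def by auto
  have "pc * pd > 0" using viol pa0 pb0 unfolding pa_def pb_def pc_def pd_def
    by (smt (verit) mult_nonneg_nonneg)
  hence pcp: "pc > 0" and pdp: "pd > 0" using pc0 pd0
    by (metis less_eq_real_def mult_zero_left mult_zero_right)+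
  define u where "u = (\<lambda>x::nat. (if x = a then 1 else 0) - (if x = a' then 1 else (0::real)))"
  define z where "z = (\<lambda>x::nat. (if x = b then 1 else 0) - (if x = b' then 1 else (0::real)))"
  define D where "D = (\<lambda>x y. u x * z y)"
  define w where "w = (\<lambda>x. Xi x a - Xi x a')"
  define v where "v = (\<lambda>y. Xi b' y - Xi b y)"
  define S where "S = (\<Sum>x<n. \<Sum>y<n. P x y * w x * v y)"
  have usum: "(\<Sum>j<n. u j * Xi x j) = w x" for x
    using delta_sum(1)[OF aN ab(2), of "\<lambda>j. Xi x j"] by (simp add: u_def w_def)
  have zsum: "(\<Sum>k<n. z k * Xi k y) = - v y" for y
    using delta_sum(1)[OF bN ab(4), of "\<lambda>k. Xi k y"] by (simp add: z_def v_def)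
  have usum2: "(\<Sum>x<n. Xi x j * u x) = - w j" for j
  proof -
    have "(\<Sum>x<n. Xi x j * u x) = Xi a j - Xi a' j"
      using delta_sum(2)[OF aN ab(2), of "\<lambda>x. Xi x j"] by (simp add: u_def)
    also have "\<dots> = - w j" unfolding w_def
      by (subst Xi_flip[of a j], subst Xi_flip[of a' j]) simp
    finally show ?thesis .
  qed
  have zsum2: "(\<Sum>y<n. Xi k y * z y) = v k" for k
  proof -
    have "(\<Sum>y<n. Xi k y * z y) = Xi k b - Xi k b'"
      using delta_sum(2)[OF bN ab(4), of "\<lambda>y. Xi k y"] by (simp add: z_def)
    also have "\<dots> = v k" unfolding v_def
      by (subst Xi_flip[of k b], subst Xi_flip[of k b']) simp
    finally show ?thesis .
  qed
  have BDP: "Bf n D P = - S"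
    unfolding D_def Bf_prod_left usum zsum S_def by (simp add: sum_negf)
  have BPD: "Bf n P D = - S"
    unfolding D_def Bf_prod_right usum2 zsum2 S_def by (simp add: sum_negf)
  have wnn: "w x \<ge> 0" for x using ab unfolding w_def Xi_def by auto
  have vnn: "v y \<ge> 0" for y using ab unfolding v_def Xi_def by auto
  have wa: "w a = 1" using ab unfolding w_def Xi_def by auto
  have vb: "v b' = 1" using ab unfolding v_def Xi_def by auto
  have "P a b' * w a * v b' \<le> S" unfolding S_def
    by (rule dsum_ge) (use ab nn wnn vnn in auto)
  hence Sge: "S \<ge> pc" using wa vb by (simp add: pc_def)
  define M where "M = Bf n D D"
  define L where "L = 2 * S"
  have Lp: "L > 0" using Sge pcp by (simp add: L_def)
  define q where "q = pc * pd - pa * pb"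
  define s where "s = pa + pb + pc + pd"
  have qp: "q > 0" using viol by (simp add: q_def pa_def pb_def pc_def pd_def)
  have sp: "s > 0" using pa0 pb0 pcp pdp by (simp add: s_def)
  define e where "e = min (min pc pd / 2) (min (q/s/2) (L/(\<bar>M\<bar>+1)/2))"
  have ep: "e > 0" using pcp pdp qp sp Lp by (simp add: e_def)
  have ec: "e < pc" and ed: "e < pd" using pcp pdp unfolding e_def by linarith+
  have "e \<le> q/s/2" unfolding e_def by linarith
  hence "e * s \<le> q/2" using sp by (simp add: field_simps)
  hence es: "e * s < q" using qp by linarith
  have "e \<le> L/(\<bar>M\<bar>+1)/2" unfolding e_def by linarith
  hence "e * (\<bar>M\<bar>+1) \<le> L/2" by (simp add: field_simps)
  hence "e * \<bar>M\<bar> + e \<le> L/2" by (simp add: distrib_left)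
  moreover have "0 \<le> e * \<bar>M\<bar>" using ep by simp
  ultimately have "e * \<bar>M\<bar> < L" using ep by linarith
  moreover have "e * M \<le> e * \<bar>M\<bar>" using ep by (simp add: mult_left_mono)
  ultimately have LM: "L - e * M > 0" by linarith
  define Pe where "Pe = (\<lambda>x y. P x y + e * D x y)"
  have zsum0: "(\<Sum>y<n. z y) = 0" using ab by (simp add: z_def sum_subtractf)
  have usum0: "(\<Sum>x<n. u x) = 0" using ab by (simp add: u_def sum_subtractf)
  have Pe_nn: "0 \<le> Pe x y" if "x < n" "y < n" for x y
    using ab that nn[OF that] ec ed ep unfolding Pe_def D_def u_def z_def pc_def pd_def
    by auto
  have copPe: "checkerboard_copula n Pe"
  proof -
    have r: "(\<Sum>y<n. Pe x y) = 1/real n" if "x < n" for x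
      using rows[OF that] zsum0 by (simp add: Pe_def D_def sum.distrib sum_distrib_left[symmetric])
    have c: "(\<Sum>x<n. Pe x y) = 1/real n" if "y < n" for y
    proof -
      have "(\<Sum>x<n. Pe x y) = (\<Sum>x<n. P x y) + e * z y * (\<Sum>x<n. u x)"
        by (simp add: Pe_def D_def sum.distrib sum_distrib_left mult_ac)
      thus ?thesis using cols[OF that] usum0 by simp
    qed
    show ?thesis using Pe_nn r c by (simp add: checkerboard_copula_def)
  qed
  have tauPe: "kendall_tau n Pe = \<mu> + e * (L - e * M)"
  proof -
    have "kendall_tau n Pe = 1 - (Bf n P P + e * (Bf n P D + Bf n D P) + e^2 * Bf n D D)"
      unfolding tau_Bf Pe_def by (simp only: Bf_pert)
    moreover have "Bf n P P = 1 - \<mu>" using tauP by (simp add: tau_Bf)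
    ultimately show ?thesis by (simp add: BPD BDP L_def M_def power2_eq_square algebra_simps)
  qed
  have tauPe_gt: "kendall_tau n Pe > \<mu>" using tauPe ep LM by simp
  have infoPe: "info n Pe < info n P"
  proof -
    define h where "h x y = Pe x y * ln (Pe x y) - P x y * ln (P x y)" for x y
    have "info n Pe - info n P = (\<Sum>x<n. \<Sum>y<n. h x y)"
      by (simp add: info_alt h_def sum_subtractf)
    also have "\<dots> = h a b + h a b' + h a' b + h a' b'"
      by (rule sum4) (use ab in \<open>auto simp: h_def Pe_def D_def u_def z_def\<close>)
    also have "h a b \<le> (ln (pa + e) + 1) * e"
    proof -
      have E: "h a b = (pa + e) * ln (pa + e) - pa * ln pa"
        using ab by (simp add: h_def Pe_def D_def u_def z_def pa_def)
      have T: "(pa + e) * ln (pa + e) + (ln (pa + e) + 1) * (pa - (pa + e)) \<le> pa * ln pa"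
        by (rule tangent) (use pa0 ep ep in auto)
      have "pa - (pa + e) = - e" by simp
      hence "(ln (pa + e) + 1) * (pa - (pa + e)) = - ((ln (pa + e) + 1) * e)" by simp
      thus ?thesis using E T by linarith
    qed
    also have "h a b' \<le> - ((ln (pc - e) + 1) * e)"
    proof -
      have E: "h a b' = (pc - e) * ln (pc - e) - pc * ln pc"
        using ab by (simp add: h_def Pe_def D_def u_def z_def pc_def)
      have T: "(pc - e) * ln (pc - e) + (ln (pc - e) + 1) * (pc - (pc - e)) \<le> pc * ln pc"
        by (rule tangent) (use pc0 ep ec in auto)
      have "pc - (pc - e) = e" by simp
      hence "(ln (pc - e) + 1) * (pc - (pc - e)) = (ln (pc - e) + 1) * e" by simp
      thus ?thesis using E T by linarith
    qed
    also have "h a' b \<le> - ((ln (pd - e) + 1) * e)"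
    proof -
      have E: "h a' b = (pd - e) * ln (pd - e) - pd * ln pd"
        using ab by (simp add: h_def Pe_def D_def u_def z_def pd_def)
      have T: "(pd - e) * ln (pd - e) + (ln (pd - e) + 1) * (pd - (pd - e)) \<le> pd * ln pd"
        by (rule tangent) (use pd0 ep ed in auto)
      have "pd - (pd - e) = e" by simp
      hence "(ln (pd - e) + 1) * (pd - (pd - e)) = (ln (pd - e) + 1) * e" by simp
      thus ?thesis using E T by linarith
    qed
    also have "h a' b' \<le> (ln (pb + e) + 1) * e"
    proof -
      have E: "h a' b' = (pb + e) * ln (pb + e) - pb * ln pb"
        using ab by (simp add: h_def Pe_def D_def u_def z_def pb_def)
      have T: "(pb + e) * ln (pb + e) + (ln (pb + e) + 1) * (pb - (pb + e)) \<le> pb * ln pb"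
        by (rule tangent) (use pb0 ep ep in auto)
      have "pb - (pb + e) = - e" by simp
      hence "(ln (pb + e) + 1) * (pb - (pb + e)) = - ((ln (pb + e) + 1) * e)" by simp
      thus ?thesis using E T by linarith
    qed
    also have "(ln (pa + e) + 1) * e + - ((ln (pc - e) + 1) * e) + - ((ln (pd - e) + 1) * e) + (ln (pb + e) + 1) * e
        = e * (ln ((pa + e) * (pb + e)) - ln ((pc - e) * (pd - e)))"
    proof -
      have l1: "ln ((pa + e) * (pb + e)) = ln (pa + e) + ln (pb + e)"
        by (rule ln_mult_pos) (use pa0 pb0 ep in auto)
      have l2: "ln ((pc - e) * (pd - e)) = ln (pc - e) + ln (pd - e)"
        by (rule ln_mult_pos) (use ec ed in auto)
      show ?thesis unfolding l1 l2 by (simp add: algebra_simps)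
    qed
    also have "\<dots> < 0"
    proof -
      have "(pc - e) * (pd - e) - (pa + e) * (pb + e) = q - e * s"
        by (simp add: q_def s_def algebra_simps)
      hence "(pa + e) * (pb + e) < (pc - e) * (pd - e)" using es by linarith
      moreover have "(pa + e) * (pb + e) > 0" using pa0 pb0 ep by (simp add: add_nonneg_pos)
      ultimately have "ln ((pa + e) * (pb + e)) < ln ((pc - e) * (pd - e))" by simp
      thus ?thesis using ep by (simp add: mult_pos_neg)
    qed
    finally show ?thesis by simp
  qed
  define Pi :: "nat \<Rightarrow> nat \<Rightarrow> real" where "Pi = (\<lambda>x y. 1/real n * (1/real n))"
  have copPi: "checkerboard_copula n Pi" unfolding Pi_def by (rule Pi_cop[OF n0])
  have tauPi: "kendall_tau n Pi = 0" unfolding Pi_def by (rule Pi_tau[OF n0])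
  have gP: "info n Pi \<le> info n P" unfolding Pi_def by (rule gibbs[OF n0 cop])
  have gPe: "info n Pi \<le> info n Pe" unfolding Pi_def by (rule gibbs[OF n0 copPe])
  show False
  proof (cases "\<mu> = 0")
    case True
    hence "feasible n \<mu> Pi" using copPi tauPi by (simp add: feasible_def)
    hence "info n P \<le> info n Pi" by (rule opt)
    thus False using gPe infoPe by linarith
  next
    case False
    hence mup: "\<mu> > 0" using assms(2) by simp
    define Q where "Q t = (\<lambda>x y. (1-t) * Pi x y + t * Pe x y)" for t
    define g where "g t = 1 - Bf n (Q t) (Q t)" for t
    have gt: "kendall_tau n (Q t) = g t" for t by (simp add: g_def tau_Bf)
    have Q0: "Q 0 = Pi" by (simp add: Q_def)
    have Q1: "Q 1 = Pe" by (simp add: Q_def)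
    have g0: "g 0 \<le> \<mu>" using tauPi gt[of 0] Q0 mup by simp
    have g1: "\<mu> \<le> g 1" using tauPe_gt gt[of 1] Q1 by simp
    have cont: "\<forall>t. 0 \<le> t \<and> t \<le> 1 \<longrightarrow> isCont g t"
      unfolding g_def Bf_def Q_def by (intro allI impI continuous_intros)
    obtain t where t0: "0 \<le> t" and t1: "t \<le> 1" and gtm: "g t = \<mu>"
      using IVT[of g 0 \<mu> 1, OF g0 g1 _ cont] by auto
    have tp: "t > 0" using gtm g0 t0 mup tauPi gt[of 0] Q0 by (cases "t = 0") auto
    have copQ: "checkerboard_copula n (Q t)"
    proof -
      have nnPe: "\<And>x y. x < n \<Longrightarrow> y < n \<Longrightarrow> 0 \<le> Pe x y" using copPe by (simp add: checkerboard_copula_def)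
      have rPe: "\<And>x. x < n \<Longrightarrow> (\<Sum>y<n. Pe x y) = 1/real n" using copPe by (simp add: checkerboard_copula_def)
      have cPe: "\<And>y. y < n \<Longrightarrow> (\<Sum>x<n. Pe x y) = 1/real n" using copPe by (simp add: checkerboard_copula_def)
      have rPi: "(\<Sum>y<n. Pi x y) = 1/real n" for x using n0 by (simp add: Pi_def)
      have cPi: "(\<Sum>x<n. Pi x y) = 1/real n" for y using n0 by (simp add: Pi_def)
      have "(\<Sum>y<n. Q t x y) = 1/real n" if "x < n" for x
      proof -
        have "(\<Sum>y<n. Q t x y) = (1-t) * (\<Sum>y<n. Pi x y) + t * (\<Sum>y<n. Pe x y)"
          by (simp add: Q_def sum.distrib sum_distrib_left)
        thus ?thesis using rPi rPe[OF that] n0 by (simp add: field_simps)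
      qed
      moreover have "(\<Sum>x<n. Q t x y) = 1/real n" if "y < n" for y
      proof -
        have "(\<Sum>x<n. Q t x y) = (1-t) * (\<Sum>x<n. Pi x y) + t * (\<Sum>x<n. Pe x y)"
          by (simp add: Q_def sum.distrib sum_distrib_left)
        thus ?thesis using cPi cPe[OF that] n0 by (simp add: field_simps)
      qed
      moreover have "0 \<le> Q t x y" if "x < n" "y < n" for x y
        using nnPe[OF that] t0 t1 by (simp add: Q_def Pi_def)
      ultimately show ?thesis by (simp add: checkerboard_copula_def)
    qed
    have "feasible n \<mu> (Q t)" using copQ gt gtm by (simp add: feasible_def)
    hence le: "info n P \<le> info n (Q t)" by (rule opt)
    have "info n (Q t) \<le> (\<Sum>x<n. \<Sum>y<n. (1-t) * (Pi x y * ln (Pi x y)) + t * (Pe x y * ln (Pe x y)))"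
      unfolding info_alt Q_def
      using copPe t0 t1 by (intro sum_mono phi_convex) (auto simp: Pi_def checkerboard_copula_def)
    also have "\<dots> = (1-t) * info n Pi + t * info n Pe"
      by (simp add: info_alt sum.distrib sum_distrib_left)
    also have "\<dots> < (1-t) * info n P + t * info n P"
      using gP infoPe tp t1 by (intro add_le_less_mono mult_left_mono mult_strict_left_mono) auto
    also have "\<dots> = info n P" by (simp add: algebra_simps)
    finally show False using le by simp
  qed
qed

end
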